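(* Fix an $\mathrm{HNN}_k$ architecture with parameter vector $\Theta\in\mathbb{R}^m$, and denote by $v_\Theta$ the corresponding network function. Let $\Omega\subset\mathbb{R}^d$ be a domain of finite measure. There exists a set $\mathcal N\subset\mathbb{R}^m$ such that: 1. if $\Theta_0\notin\mathcal N$, then for every sequence $\{\Theta_n\}_{n\in\mathbb{N}}\subset\mathbb{R}^m$ converging to $\Theta_0$, $v_{\Theta_n}\to v_{\Theta_0}$ in $L^2(\Omega)$; 2. if $\Omega$ is bounded, each $\Theta\in\mathcal N$ admits $\Theta'\notin\mathcal N$ satisfying $v_\Theta\equiv v_{\Theta'}$ in $\Omega$. Moreover, $\mathcal N$ is a finite union of subspaces of $\mathbb{R}^m$, each of dimension $m-d$ (in particular, $\mathcal N$ has Lebesgue measure zero).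
   Context: $\mathrm{HNN}_k$ networks are functions $v(x)=\Theta^k\circ\sigma\circ\Theta^{k-1}\circ\sigma\circ\cdots\circ\Theta^1\circ\sigma_s\circ\Theta^0(x)$, $x\in\mathbb{R}^d$, with affine maps $\Theta^j:\mathbb{R}^{n_j}\to\mathbb{R}^{n_{j+1}}$ ($n_0=d$, $n_{k+1}=1$) whose coefficients form the parameter vector $\Theta\in\mathbb{R}^m$, $\sigma=\mathrm{ReLU}$, and $\sigma_s=H$ the Heaviside function ($H(t)=1$ for $t\ge0$, $0$ for $t<0$); activations are applied componentwise. In particular the first layer is $x\mapsto(H(a_1\cdot x+b_1),\dots,H(a_\ell\cdot x+b_\ell))$ with $a_i\in\mathbb{R}^d$, $b_i\in\mathbb{R}$. *)

theory Defs
  imports "HOL-Analysis.Analysis"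
begin

definition heaviside :: "real \<Rightarrow> real" where
  "heaviside t = (if t \<ge> 0 then 1 else 0)"

definition relu :: "real \<Rightarrow> real" where
  "relu t = max 0 t"

text \<open>An architecture is a list of widths ns = [n_0, n_1, ..., n_k, n_{k+1}]
  with n_0 = d and n_{k+1} = 1.  The affine map Theta^j : R^{n_j} -> R^{n_{j+1}}
  has (n_j + 1) * n_{j+1} coefficients.  Parameters are laid out in a flat vector
  P :: nat => real: layer by layer, and inside layer j row by row, each row r
  consisting of the n_j weights followed by the bias.\<close>

definition nparams :: "nat list \<Rightarrow> nat" where
  "nparams ns = (\<Sum>j<length ns - 1. (ns!j + 1) * ns!(Suc j))"

definition layer_offset :: "nat list \<Rightarrow> nat \<Rightarrow> nat" where
  "layer_offset ns j = (\<Sum>i<j. (ns!i + 1) * ns!(Suc i))"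

definition wt :: "nat list \<Rightarrow> (nat \<Rightarrow> real) \<Rightarrow> nat \<Rightarrow> nat \<Rightarrow> nat \<Rightarrow> real" where
  "wt ns P j r c = P (layer_offset ns j + r * (ns!j + 1) + c)"

definition bs :: "nat list \<Rightarrow> (nat \<Rightarrow> real) \<Rightarrow> nat \<Rightarrow> nat \<Rightarrow> real" where
  "bs ns P j r = P (layer_offset ns j + r * (ns!j + 1) + ns!j)"

definition aff :: "nat list \<Rightarrow> (nat \<Rightarrow> real) \<Rightarrow> nat \<Rightarrow> (nat \<Rightarrow> real) \<Rightarrow> nat \<Rightarrow> real" where
  "aff ns P j y r = (\<Sum>c<ns!j. wt ns P j r c * y c) + bs ns P j r"

text \<open>hid ns P x j = output of hidden layer j+1 (after its activation).\<close>
fun hid :: "nat list \<Rightarrow> (nat \<Rightarrow> real) \<Rightarrow> (nat \<Rightarrow> real) \<Rightarrow> nat \<Rightarrow> nat \<Rightarrow> real" where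
  "hid ns P x 0 = (\<lambda>r. heaviside (aff ns P 0 x r))"
| "hid ns P x (Suc j) = (\<lambda>r. relu (aff ns P (Suc j) (hid ns P x j) r))"

text \<open>The network function, with k = length ns - 2.\<close>
definition net :: "nat list \<Rightarrow> (nat \<Rightarrow> real) \<Rightarrow> (nat \<Rightarrow> real) \<Rightarrow> real" where
  "net ns P x = aff ns P (length ns - 2) (hid ns P x (length ns - 3)) 0"

text \<open>The network function v_Theta on R^d for a parameter vector Theta in R^m,
  where the coordinates of R^m (resp. R^d) are enumerated by enum (resp. ein).\<close>
definition hnn :: "nat list \<Rightarrow> (nat \<Rightarrow> 'm::finite) \<Rightarrow> (nat \<Rightarrow> 'd::finite)
    \<Rightarrow> real^'m \<Rightarrow> real^'d \<Rightarrow> real" where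
  "hnn ns enum ein \<Theta> x = net ns (\<lambda>p. \<Theta> $ enum p) (\<lambda>c. x $ ein c)"

end

theory Submission
  imports Defs
begin


lemma layer_offset_0[simp]: "layer_offset ns 0 = 0"
  by (simp add: layer_offset_def)

lemma layer_offset_Suc: "layer_offset ns (Suc j) = layer_offset ns j + (ns!j + 1) * ns!(Suc j)"
  by (simp add: layer_offset_def)

lemma layer_offset_mono: "i \<le> j \<Longrightarrow> layer_offset ns i \<le> layer_offset ns j"
  unfolding layer_offset_def by (rule sum_mono2) auto

lemma nparams_ge: "Suc j \<le> length ns - 1 \<Longrightarrow> layer_offset ns (Suc j) \<le> nparams ns"
  unfolding layer_offset_def nparams_def by (rule sum_mono2) auto

lemma idx_bound:
  assumes "r < ns!(Suc j)" "c \<le> ns!j"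
  shows "layer_offset ns j + r * (ns!j + 1) + c < layer_offset ns (Suc j)"
proof -
  have "r * (ns!j + 1) + c < (r+1) * (ns!j+1)" using assms by simp
  also have "\<dots> \<le> ns!(Suc j) * (ns!j+1)" using assms by (intro mult_right_mono) auto
  finally show ?thesis by (simp add: layer_offset_Suc mult.commute)
qed

lemma idx_ge:
  assumes "1 \<le> j"
  shows "layer_offset ns 1 \<le> layer_offset ns j + q"
  using layer_offset_mono[OF assms, of ns] by simp

lemma net_local:
  assumes L: "length ns \<ge> 3" and pos: "\<forall>w\<in>set ns. w > 0"
    and PQ: "\<And>p. layer_offset ns 1 \<le> p \<Longrightarrow> p < nparams ns \<Longrightarrow> P p = Q p"
    and H0: "\<And>r. r < ns!1 \<Longrightarrow> hid ns P x 0 r = hid ns Q x 0 r"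
  shows "net ns P x = net ns Q x"
proof -
  have affeq: "aff ns P (Suc j) y r = aff ns Q (Suc j) y r"
    if "Suc j \<le> length ns - 2" "r < ns!(Suc (Suc j))" for j y r
  proof -
    have "P (layer_offset ns (Suc j) + r * (ns!(Suc j) + 1) + c) = Q (layer_offset ns (Suc j) + r * (ns!(Suc j) + 1) + c)"
      if "c \<le> ns!(Suc j)" for c
    proof (rule PQ)
      show "layer_offset ns 1 \<le> layer_offset ns (Suc j) + r * (ns ! Suc j + 1) + c"
        using layer_offset_mono[of 1 "Suc j" ns] by simp
      have "layer_offset ns (Suc j) + r * (ns ! Suc j + 1) + c < layer_offset ns (Suc (Suc j))"
        using idx_bound[of r ns "Suc j" c] that \<open>r < _\<close> by simp
      also have "\<dots> \<le> nparams ns" using \<open>Suc j \<le> length ns - 2\<close> by (intro nparams_ge) simp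
      finally show "layer_offset ns (Suc j) + r * (ns ! Suc j + 1) + c < nparams ns" .
    qed
    then show ?thesis unfolding aff_def wt_def bs_def by (intro arg_cong2[where f="(+)"] sum.cong) auto
  qed
  have "\<forall>r<ns!(Suc j). hid ns P x j r = hid ns Q x j r" if "j \<le> length ns - 3" for j
    using that
  proof (induction j)
    case 0 then show ?case using H0 by simp
  next
    case (Suc j)
    then have IH: "\<forall>r<ns!(Suc j). hid ns P x j r = hid ns Q x j r" by simp
    show ?case
    proof (intro allI impI)
      fix r assume r: "r < ns!(Suc (Suc j))"
      have "aff ns P (Suc j) (hid ns P x j) r = aff ns P (Suc j) (hid ns Q x j) r"
        unfolding aff_def using IH by (intro arg_cong2[where f="(+)"] sum.cong) auto
      also have "\<dots> = aff ns Q (Suc j) (hid ns Q x j) r"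
        using Suc.prems r by (intro affeq) auto
      finally show "hid ns P x (Suc j) r = hid ns Q x (Suc j) r" by simp
    qed
  qed
  note IHall = this
  obtain j where j: "length ns - 2 = Suc j" "length ns - 3 = j" using L by (intro that[of "length ns - 3"]) auto
  have IH: "\<forall>r<ns!(Suc j). hid ns P x j r = hid ns Q x j r"
    using IHall[of j] j by simp
  have "net ns P x = aff ns P (Suc j) (hid ns P x j) 0" unfolding net_def using j by simp
  also have "\<dots> = aff ns P (Suc j) (hid ns Q x j) 0"
    unfolding aff_def using IH j by (intro arg_cong2[where f="(+)"] sum.cong) auto
  also have "\<dots> = aff ns Q (Suc j) (hid ns Q x j) 0"
    using j L pos by (intro affeq) (auto simp: nth_mem)
  also have "\<dots> = net ns Q x" unfolding net_def using j by simp
  finally show ?thesis .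
qed

lemma aff_tendsto:
  assumes "\<And>p. (\<lambda>n. Ps n p) \<longlonglongrightarrow> P p"
    and "\<And>c. c < ns!j \<Longrightarrow> (\<lambda>n. ys n c) \<longlonglongrightarrow> y c"
  shows "(\<lambda>n. aff ns (Ps n) j (ys n) r) \<longlonglongrightarrow> aff ns P j y r"
  unfolding aff_def wt_def bs_def using assms by (intro tendsto_intros) auto

lemma net_tendsto:
  assumes L: "length ns \<ge> 3"
    and PQ: "\<And>p. (\<lambda>n. Ps n p) \<longlonglongrightarrow> P p"
    and H0: "\<And>r. r < ns!1 \<Longrightarrow> (\<lambda>n. hid ns (Ps n) x 0 r) \<longlonglongrightarrow> hid ns P x 0 r"
  shows "(\<lambda>n. net ns (Ps n) x) \<longlonglongrightarrow> net ns P x"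
proof -
  have "\<forall>r<ns!(Suc j). (\<lambda>n. hid ns (Ps n) x j r) \<longlonglongrightarrow> hid ns P x j r" for j
  proof (induction j)
    case 0 then show ?case using H0 by simp
  next
    case (Suc j)
    show ?case
    proof (intro allI impI)
      fix r assume r: "r < ns!(Suc (Suc j))"
      have "(\<lambda>n. aff ns (Ps n) (Suc j) (hid ns (Ps n) x j) r) \<longlonglongrightarrow> aff ns P (Suc j) (hid ns P x j) r"
        using Suc.IH PQ by (intro aff_tendsto) auto
      then have "(\<lambda>n. relu (aff ns (Ps n) (Suc j) (hid ns (Ps n) x j) r)) \<longlonglongrightarrow> relu (aff ns P (Suc j) (hid ns P x j) r)"
        unfolding relu_def by (intro tendsto_intros)
      then show "(\<lambda>n. hid ns (Ps n) x (Suc j) r) \<longlonglongrightarrow> hid ns P x (Suc j) r" by simp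
    qed
  qed
  note IHall = this
  obtain j where j: "length ns - 2 = Suc j" "length ns - 3 = j" using L by (intro that[of "length ns - 3"]) auto
  have "(\<lambda>n. aff ns (Ps n) (Suc j) (hid ns (Ps n) x j) 0) \<longlonglongrightarrow> aff ns P (Suc j) (hid ns P x j) 0"
    using IHall[of j] PQ by (intro aff_tendsto) auto
  then show ?thesis unfolding net_def using j by simp
qed

lemma heaviside_tendsto:
  assumes "(g \<longlongrightarrow> t) F" "t \<noteq> (0::real)"
  shows "((\<lambda>n. heaviside (g n)) \<longlongrightarrow> heaviside t) F"
proof (cases "t > 0")
  case True
  then have "eventually (\<lambda>n. g n > 0) F" using order_tendstoD(1)[OF assms(1) True] by simp
  then have "eventually (\<lambda>n. heaviside (g n) = heaviside t) F"
    by eventually_elim (use True in \<open>auto simp: heaviside_def\<close>)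
  then show ?thesis by (rule tendsto_eventually)
next
  case False
  then have "t < 0" using assms(2) by simp
  then have "eventually (\<lambda>n. g n < 0) F" using order_tendstoD(2)[OF assms(1) \<open>t < 0\<close>] by simp
  then have "eventually (\<lambda>n. heaviside (g n) = heaviside t) F"
    by eventually_elim (use \<open>t < 0\<close> in \<open>auto simp: heaviside_def\<close>)
  then show ?thesis by (rule tendsto_eventually)
qed

primrec hb :: "nat list \<Rightarrow> real \<Rightarrow> nat \<Rightarrow> real" where
  "hb ns M 0 = 1"
| "hb ns M (Suc j) = M * (real (ns!(Suc j)) * hb ns M j + 1)"

lemma hb_nonneg: "M \<ge> 0 \<Longrightarrow> hb ns M j \<ge> 0"
  by (induction j) auto

lemma aff_bound:
  assumes "\<And>p. \<bar>P p\<bar> \<le> M" "\<And>c. \<bar>y c\<bar> \<le> B"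
  shows "\<bar>aff ns P j y r\<bar> \<le> M * (real (ns!j) * B + 1)"
proof -
  have "\<bar>aff ns P j y r\<bar> \<le> (\<Sum>c<ns!j. \<bar>wt ns P j r c * y c\<bar>) + \<bar>bs ns P j r\<bar>"
    unfolding aff_def by (rule order_trans[OF abs_triangle_ineq]) (simp add: sum_abs)
  also have "\<dots> \<le> (\<Sum>c<ns!j. M * B) + M"
    unfolding wt_def bs_def abs_mult using assms
    by (intro add_mono sum_mono mult_mono) (auto intro: order_trans[OF abs_ge_zero])
  also have "\<dots> = M * (real (ns!j) * B + 1)" by (simp add: algebra_simps)
  finally show ?thesis .
qed

lemma net_bound:
  assumes L: "length ns \<ge> 3" and M: "\<And>p. \<bar>P p\<bar> \<le> M"
  shows "\<bar>net ns P x\<bar> \<le> hb ns M (length ns - 2)"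
proof -
  have M0: "M \<ge> 0" using M[of 0] by linarith
  have hbd: "\<bar>hid ns P x j r\<bar> \<le> hb ns M j" for j r
  proof (induction j arbitrary: r)
    case 0 then show ?case by (simp add: heaviside_def)
  next
    case (Suc j)
    have "\<bar>relu t\<bar> \<le> \<bar>t\<bar>" for t by (simp add: relu_def)
    then show ?case using aff_bound[where P=P and M=M and y="hid ns P x j" and B="hb ns M j" and ns=ns and j="Suc j" and r=r, OF M Suc.IH]
      by (simp del: hid.simps) (smt (verit) hid.simps(2))
  qed
  obtain j where j: "length ns - 2 = Suc j" "length ns - 3 = j" using L by (intro that[of "length ns - 3"]) auto
  show ?thesis unfolding net_def using aff_bound[where P=P and M=M and y="hid ns P x j" and B="hb ns M j" and ns=ns and j="Suc j" and r=0, OF M hbd] j by simp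
qed

lemma heaviside_meas[measurable]: "heaviside \<in> borel_measurable borel"
proof -
  have eq: "heaviside = (\<lambda>t. if t \<in> {0..} then 1 else 0)" by (auto simp: heaviside_def fun_eq_iff)
  show ?thesis by (subst eq) measurable
qed

lemma relu_meas[measurable]: "relu \<in> borel_measurable borel"
  unfolding relu_def[abs_def] by measurable

lemma aff_meas:
  assumes "\<And>c. (\<lambda>x. y x c) \<in> borel_measurable M"
  shows "(\<lambda>x. aff ns P j (y x) r) \<in> borel_measurable M"
  unfolding aff_def using assms by measurable

lemma net_meas:
  assumes "\<And>c. (\<lambda>x. y x c) \<in> borel_measurable M"
  shows "(\<lambda>x. net ns P (y x)) \<in> borel_measurable M"
proof -
  have "(\<lambda>x. hid ns P (y x) j r) \<in> borel_measurable M" for j r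
  proof (induction j arbitrary: r)
    case 0 show ?case using aff_meas[OF assms] by simp
  next
    case (Suc j) show ?case using aff_meas[OF Suc.IH] by simp
  qed
  then show ?thesis unfolding net_def by (intro aff_meas)
qed



lemma divmod_row: "c < Suc d \<Longrightarrow> (r*(d+1)+c) div (d+1) = r \<and> (r*(d+1)+c) mod (d+1) = c"
proof -
  assume c: "c < Suc d"
  have e: "r*(d+1)+c = c + (d+1)*r" by simp
  show ?thesis unfolding e using c by (simp only: div_mult_self2 mod_mult_self2) simp
qed

lemma net_local':
  assumes L: "length ns \<ge> 3" and pos: "\<forall>w\<in>set ns. w > 0"
    and PQ: "\<And>p. p < nparams ns \<Longrightarrow> P p = Q p"
  shows "net ns P x = net ns Q x"
proof (rule net_local[OF L pos])
  show "P p = Q p" if "p < nparams ns" for p using PQ that .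
  fix r assume r: "r < ns!1"
  have lo: "layer_offset ns 1 \<le> nparams ns" using nparams_ge[of 0 ns] L by simp
  have "P (layer_offset ns 0 + r * (ns!0 + 1) + c) = Q (layer_offset ns 0 + r * (ns!0 + 1) + c)"
    if "c \<le> ns!0" for c
    using idx_bound[of r ns 0 c] r that lo by (intro PQ) simp
  then show "hid ns P x 0 r = hid ns Q x 0 r"
    unfolding hid.simps aff_def wt_def bs_def by (intro arg_cong[where f=heaviside] arg_cong2[where f="(+)"] sum.cong) auto
qed

lemma part2:
  fixes P :: "nat \<Rightarrow> real" and d kk :: nat and R :: real and X :: "(nat \<Rightarrow> real) set"
  assumes L: "length ns \<ge> 3" and pos: "\<forall>w\<in>set ns. w > 0" and n0: "ns!0 = d" and kk: "ns!1 = kk"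
    and d1: "d \<ge> 1" and R: "R \<ge> 0" and XR: "\<And>y c. y \<in> X \<Longrightarrow> c < d \<Longrightarrow> \<bar>y c\<bar> \<le> R"
  obtains Q where "\<And>y. y \<in> X \<Longrightarrow> net ns Q y = net ns P y"
    "\<And>r. r < kk \<Longrightarrow> \<exists>c<d. Q (r*(d+1)+c) \<noteq> 0" "\<And>p. (d+1)*kk \<le> p \<Longrightarrow> Q p = P p"
    "\<And>p. p \<notin> {..<(d+1)*kk} \<Longrightarrow> Q p = P p"
proof -
  define Z where "Z r \<longleftrightarrow> (\<forall>c<d. P(r*(d+1)+c) = 0)" for r
  define \<epsilon> where "\<epsilon> = 1 / (real d * R + 1)"
  have eps: "\<epsilon> > 0" using R unfolding \<epsilon>_def by (simp add: add_nonneg_pos)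
  define Q where "Q p = (if p < (d+1)*kk \<and> Z (p div (d+1)) then
      (if p mod (d+1) < d then \<epsilon> else (if P p \<ge> 0 then 1 else -1)) else P p)" for p
  have Qrow: "Q (r*(d+1)+c) = (if Z r then (if c < d then \<epsilon> else (if P (r*(d+1)+c) \<ge> 0 then 1 else -1)) else P (r*(d+1)+c))"
    if "r < kk" "c \<le> d" for r c
  proof -
    have "r*(d+1)+c < (r+1)*(d+1)" using that by simp
    also have "\<dots> \<le> kk*(d+1)" using that by (intro mult_right_mono) auto
    finally have "r*(d+1)+c < (d+1)*kk" by (simp add: mult.commute)
    then show ?thesis unfolding Q_def using divmod_row[of c d r] that by auto
  qed
  have c3: "Q p = P p" if "(d+1)*kk \<le> p" for p using that unfolding Q_def by auto
  have c2: "\<exists>c<d. Q (r*(d+1)+c) \<noteq> 0" if r: "r < kk" for r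
  proof (cases "Z r")
    case True
    have "d > 0" using d1 by simp
    then show ?thesis using Qrow[OF r, of 0] True eps by (intro exI[of _ 0]) auto
  next
    case False
    then obtain c where "c < d" "P(r*(d+1)+c) \<noteq> 0" unfolding Z_def by auto
    then show ?thesis using Qrow[OF r, of c] False by (intro exI[of _ c]) auto
  qed
  have c1: "net ns Q y = net ns P y" if y: "y \<in> X" for y
  proof (rule net_local[OF L pos])
    show "Q p = P p" if "layer_offset ns 1 \<le> p" for p
    proof -
      have "layer_offset ns 1 = (d+1)*kk" using n0 kk by (simp add: layer_offset_def)
      then show ?thesis using that c3 by simp
    qed
    fix r assume r: "r < ns!1"
    then have r': "r < kk" using kk by simp
    have aff0: "aff ns X0 0 y r = (\<Sum>c<d. X0 (r*(d+1)+c) * y c) + X0 (r*(d+1)+d)" for X0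
      unfolding aff_def wt_def bs_def n0 by simp
    show "hid ns Q y 0 r = hid ns P y 0 r"
    proof (cases "Z r")
      case False
      then show ?thesis unfolding hid.simps aff0 using Qrow[OF r'] by simp
    next
      case True
      define b where "b = P (r*(d+1)+d)"
      have aP: "aff ns P 0 y r = b" unfolding aff0 b_def using True by (simp add: Z_def)
      have aQ: "aff ns Q 0 y r = (\<Sum>c<d. \<epsilon> * y c) + (if b \<ge> 0 then 1 else -1)"
        unfolding aff0 b_def using True Qrow[OF r'] by simp
      have "\<bar>\<Sum>c<d. \<epsilon> * y c\<bar> \<le> (\<Sum>c<d. \<epsilon> * R)"
        by (rule order_trans[OF sum_abs]) (intro sum_mono, use eps XR[OF y] in \<open>auto simp: abs_mult intro: mult_left_mono\<close>)
      also have "\<dots> = \<epsilon> * (real d * R)" by simp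
      also have "\<dots> < 1"
      proof -
        have "0 \<le> real d * R" using R by simp
        then show ?thesis unfolding \<epsilon>_def by (simp add: divide_less_eq)
      qed
      finally have "\<bar>\<Sum>c<d. \<epsilon> * y c\<bar> < 1" .
      then show ?thesis unfolding hid.simps aQ aP heaviside_def by auto
    qed
  qed
  show ?thesis using c1 c2 c3 by (intro that[of Q]) auto
qed



lemma part3:
  fixes enum :: "nat \<Rightarrow> 'm::finite" and d n1 :: nat
  assumes inj: "inj_on enum {..<CARD('m)}" and dm: "(d+1)*n1 \<le> CARD('m)" and d1: "d \<ge> 1"
    and r: "r < n1"
  defines "S \<equiv> {\<Theta>::real^'m. \<forall>c<d. \<Theta> $ enum (r*(d+1)+c) = 0}"
  shows "subspace S" "dim S = CARD('m) - d" "negligible S" "closed S"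
proof -
  show "subspace S" unfolding S_def subspace_def by auto
  define K where "K = enum ` ((\<lambda>c. r*(d+1)+c) ` {..<d})"
  have sub: "(\<lambda>c. r*(d+1)+c) ` {..<d} \<subseteq> {..<CARD('m)}"
  proof
    fix p assume "p \<in> (\<lambda>c. r*(d+1)+c) ` {..<d}"
    then obtain c where c: "c < d" "p = r*(d+1)+c" by auto
    have "r*(d+1)+c < (r+1)*(d+1)" using c by simp
    also have "\<dots> \<le> n1*(d+1)" using r by (intro mult_right_mono) auto
    finally show "p \<in> {..<CARD('m)}" using c dm by (simp add: mult.commute)
  qed
  have cK: "card K = d" unfolding K_def
    by (subst card_image[OF inj_on_subset[OF inj sub]]) (simp add: card_image inj_on_def)
  have SK: "S = {x. \<forall>i. i \<notin> (UNIV - K) \<longrightarrow> x$i = 0}" unfolding S_def K_def by auto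
  have "dim S = card (UNIV - K)" unfolding SK dim_vec_eq[symmetric] by (rule dim_substandard_cart)
  also have "\<dots> = CARD('m) - d" using cK by (simp add: card_Diff_subset)
  finally show dS: "dim S = CARD('m) - d" .
  have "CARD('m) \<ge> 1" by (simp add: Suc_leI)
  then show "negligible S" using dS d1 by (intro negligible_lowdim) simp
  show "closed S" using \<open>subspace S\<close> by (rule closed_subspace)
qed



lemma closed_negl_null:
  fixes N :: "'a::euclidean_space set"
  assumes "closed N" "negligible N" shows "N \<in> null_sets lborel"
proof -
  have "N \<in> sets lborel" using assms(1) by simp
  then show ?thesis using assms(2) by (simp add: negligible_iff_null_sets null_sets_completion_iff)
qed

theorem mainTheorem16:
  fixes ns :: "nat list"
    and enum :: "nat \<Rightarrow> 'm::finite"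
    and ein :: "nat \<Rightarrow> 'd::finite"
    and \<Omega> :: "(real^'d) set"
  assumes "length ns \<ge> 3" and "ns!0 = CARD('d)" and "last ns = 1"
    and "\<forall>w\<in>set ns. w > 0"
    and "CARD('m) = nparams ns"
    and "bij_betw enum {..<CARD('m)} UNIV"
    and "bij_betw ein {..<CARD('d)} UNIV"
    and "open \<Omega>" and "connected \<Omega>" and "\<Omega> \<noteq> {}"
    and "emeasure lborel \<Omega> < \<infinity>"
  shows "\<exists>N :: (real^'m) set.
    (\<forall>\<Theta>0. \<Theta>0 \<notin> N \<longrightarrow>
       (\<forall>\<Theta>s :: nat \<Rightarrow> real^'m. \<Theta>s \<longlonglongrightarrow> \<Theta>0 \<longrightarrow>
          (\<lambda>n. \<integral>\<^sup>+ x\<in>\<Omega>. ennreal ((hnn ns enum ein (\<Theta>s n) x - hnn ns enum ein \<Theta>0 x)\<^sup>2) \<partial>lborel)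
            \<longlonglongrightarrow> 0))
    \<and> (bounded \<Omega> \<longrightarrow>
       (\<forall>\<Theta>\<in>N. \<exists>\<Theta>'. \<Theta>' \<notin> N \<and> (\<forall>x\<in>\<Omega>. hnn ns enum ein \<Theta> x = hnn ns enum ein \<Theta>' x)))
    \<and> (\<exists>F. finite F \<and> N = \<Union>F \<and>
         (\<forall>S\<in>F. subspace S \<and> dim S = CARD('m) - CARD('d)))
    \<and> N \<in> null_sets lborel"
proof -
  note L = assms(1) and pos = assms(4)
  define d where "d = CARD('d)"
  define n1 where "n1 = ns!1"
  define PP where "PP \<Theta> = (\<lambda>p. \<Theta> $ enum p)" for \<Theta> :: "real^'m"
  define xx where "xx x = (\<lambda>c. x $ ein c)" for x :: "real^'d"
  have hnn_eq: "hnn ns enum ein \<Theta> x = net ns (PP \<Theta>) (xx x)" for \<Theta> x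
    by (simp add: hnn_def PP_def xx_def)
  define S where "S r = {\<Theta>::real^'m. \<forall>c<d. \<Theta> $ enum (r*(d+1)+c) = 0}" for r
  define N where "N = \<Union>(S ` {..<n1})"
  have n0: "ns!0 = d" using assms(2) d_def by simp
  have d1: "d \<ge> 1" unfolding d_def by (simp add: Suc_leI)
  have inj: "inj_on enum {..<CARD('m)}" using assms(6) by (rule bij_betw_imp_inj_on)
  have dm: "(d+1)*n1 \<le> CARD('m)"
    using nparams_ge[of 0 ns] L assms(5) n0 by (simp add: layer_offset_Suc n1_def)
  have idxm: "r*(d+1)+c < CARD('m)" if "r < n1" "c \<le> d" for r c
  proof -
    have "r*(d+1)+c < (r+1)*(d+1)" using that by simp
    also have "\<dots> \<le> n1*(d+1)" using that by (intro mult_right_mono) auto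
    finally show ?thesis using dm by (simp add: mult.commute)
  qed
  have wt0: "wt ns P 0 r c = P (r*(d+1)+c)" for P r c by (simp add: wt_def n0)
  have bs0: "bs ns P 0 r = P (r*(d+1)+d)" for P r by (simp add: bs_def n0)
  have inN: "\<Theta> \<in> N \<longleftrightarrow> (\<exists>r<n1. \<forall>c<d. PP \<Theta> (r*(d+1)+c) = 0)" for \<Theta>
    unfolding N_def S_def PP_def by auto
  note p3 = part3[OF inj dm d1, folded S_def]
  have P3: "\<exists>F. finite F \<and> N = \<Union>F \<and> (\<forall>S\<in>F. subspace S \<and> dim S = CARD('m) - CARD('d))"
    using p3(1,2) unfolding N_def d_def by (intro exI[of _ "S ` {..<n1}"]) auto
  have P4: "N \<in> null_sets lborel"
    unfolding N_def using p3(3,4) by (intro closed_negl_null closed_Union negligible_Union) auto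
  have P2: "\<exists>\<Theta>'. \<Theta>' \<notin> N \<and> (\<forall>x\<in>\<Omega>. hnn ns enum ein \<Theta> x = hnn ns enum ein \<Theta>' x)"
    if bd: "bounded \<Omega>" and "\<Theta> \<in> N" for \<Theta>
  proof -
    obtain B where B: "\<And>x. x \<in> \<Omega> \<Longrightarrow> norm x \<le> B" using bd unfolding bounded_iff by auto
    define R where "R = max B 0"
    have R0: "0 \<le> R" unfolding R_def by simp
    have XR: "\<bar>y c\<bar> \<le> R" if yx: "y \<in> xx ` \<Omega>" and "c < d" for y c
    proof -
      obtain x where "x \<in> \<Omega>" "y = xx x" using yx by auto
      then show ?thesis unfolding xx_def R_def using B[of x] component_le_norm_cart[of x "ein c"] by auto
    qed
    obtain Q where Q1: "\<And>y. y \<in> xx ` \<Omega> \<Longrightarrow> net ns Q y = net ns (PP \<Theta>) y"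
      and Q2: "\<And>r. r < n1 \<Longrightarrow> \<exists>c<d. Q (r*(d+1)+c) \<noteq> 0"
    proof (rule part2[where P="PP \<Theta>" and X="xx ` \<Omega>" and R=R and d=d and ns=ns and kk=n1])
      show "\<And>y c. y \<in> xx ` \<Omega> \<Longrightarrow> c < d \<Longrightarrow> \<bar>y c\<bar> \<le> R" by (rule XR)
    next
      fix Q assume "\<And>y. y \<in> xx ` \<Omega> \<Longrightarrow> net ns Q y = net ns (PP \<Theta>) y"
        "\<And>r. r < n1 \<Longrightarrow> \<exists>c<d. Q (r*(d+1)+c) \<noteq> 0"
      then show thesis by (rule that)
    qed (use L pos n0 n1_def d1 R0 in auto)
    define \<Theta>' where "\<Theta>' = (\<chi> i. Q (the_inv_into {..<CARD('m)} enum i) :: real^'m)"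
    have PQ: "PP \<Theta>' p = Q p" if "p < CARD('m)" for p
      unfolding PP_def \<Theta>'_def using the_inv_into_f_f[OF inj] that by simp
    have "\<Theta>' \<notin> N"
    proof
      assume "\<Theta>' \<in> N"
      then obtain r where r: "r < n1" "\<forall>c<d. PP \<Theta>' (r*(d+1)+c) = 0" unfolding inN by auto
      obtain c where "c < d" "Q (r*(d+1)+c) \<noteq> 0" using Q2[OF r(1)] by auto
      then show False using r PQ[OF idxm[OF r(1), of c]] by auto
    qed
    moreover have "hnn ns enum ein \<Theta> x = hnn ns enum ein \<Theta>' x" if "x \<in> \<Omega>" for x
    proof -
      have "net ns (PP \<Theta>') (xx x) = net ns Q (xx x)"
        using PQ assms(5) by (intro net_local'[OF L pos]) auto
      then show ?thesis unfolding hnn_eq using Q1[of "xx x"] that by simp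
    qed
    ultimately show ?thesis by blast
  qed
  have P1: "(\<lambda>n. \<integral>\<^sup>+ x\<in>\<Omega>. ennreal ((hnn ns enum ein (\<Theta>s n) x - hnn ns enum ein \<Theta>0 x)\<^sup>2) \<partial>lborel) \<longlonglongrightarrow> 0"
    if "\<Theta>0 \<notin> N" and lim: "\<Theta>s \<longlonglongrightarrow> \<Theta>0" for \<Theta>0 \<Theta>s
  proof -
    have nz: "\<exists>c<d. PP \<Theta>0 (r*(d+1)+c) \<noteq> 0" if "r < n1" for r
      using that \<open>\<Theta>0 \<notin> N\<close> unfolding inN by auto
    have conv: "(\<lambda>n. PP (\<Theta>s n) p) \<longlonglongrightarrow> PP \<Theta>0 p" for p
      unfolding PP_def by (intro tendsto_vec_nth lim)
    obtain K where K: "\<And>n. norm (\<Theta>s n) \<le> K"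
      using convergent_imp_Bseq[of \<Theta>s] lim unfolding Bseq_def convergent_def by auto
    define M where "M = max K (norm \<Theta>0)"
    have Mn: "\<bar>PP (\<Theta>s n) p\<bar> \<le> M" for n p
      unfolding PP_def M_def using component_le_norm_cart[of "\<Theta>s n" "enum p"] K[of n] by linarith
    have M0: "\<bar>PP \<Theta>0 p\<bar> \<le> M" for p
      unfolding PP_def M_def using component_le_norm_cart[of "\<Theta>0" "enum p"] by linarith
    define C where "C = hb ns M (length ns - 2)"
    have bnd: "(hnn ns enum ein (\<Theta>s n) x - hnn ns enum ein \<Theta>0 x)\<^sup>2 \<le> (2*C)\<^sup>2" for n x
    proof -
      have b1: "\<bar>hnn ns enum ein (\<Theta>s n) x\<bar> \<le> C" unfolding hnn_eq C_def by (rule net_bound[OF L Mn])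
      have b2: "\<bar>hnn ns enum ein \<Theta>0 x\<bar> \<le> C" unfolding hnn_eq C_def by (rule net_bound[OF L M0])
      have "\<bar>hnn ns enum ein (\<Theta>s n) x - hnn ns enum ein \<Theta>0 x\<bar> \<le> 2*C" using b1 b2 by linarith
      moreover have "0 \<le> 2*C" using b1 by linarith
      ultimately show ?thesis using power2_le_iff_abs_le[of "2*C" "hnn ns enum ein (\<Theta>s n) x - hnn ns enum ein \<Theta>0 x"] by blast
    qed
    have injd: "inj_on ein {..<d}" using assms(7) unfolding d_def by (rule bij_betw_imp_inj_on)
    define a where "a r = (\<chi> i. PP \<Theta>0 (r*(d+1) + the_inv_into {..<d} ein i) :: real^'d)" for r
    define b where "b r = PP \<Theta>0 (r*(d+1)+d)" for r
    have affx: "aff ns (PP \<Theta>0) 0 (xx x) r = a r \<bullet> x + b r" for x r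
    proof -
      have "a r \<bullet> x = (\<Sum>i\<in>UNIV. a r $ i * x $ i)" by (simp add: inner_vec_def)
      also have "\<dots> = (\<Sum>c<d. a r $ ein c * x $ ein c)"
        by (rule sum.reindex_bij_betw[symmetric]) (use assms(7) in \<open>simp add: d_def\<close>)
      also have "\<dots> = (\<Sum>c<d. PP \<Theta>0 (r*(d+1)+c) * x $ ein c)"
        unfolding a_def using the_inv_into_f_f[OF injd] by simp
      finally show ?thesis unfolding aff_def wt0 bs0 b_def xx_def n0 by simp
    qed
    have anz: "a r \<noteq> 0" if rn: "r < n1" for r
    proof
      assume a0: "a r = 0"
      obtain c where c: "c < d" "PP \<Theta>0 (r*(d+1)+c) \<noteq> 0" using nz[OF rn] by auto
      have "a r $ ein c = PP \<Theta>0 (r*(d+1)+c)" unfolding a_def using the_inv_into_f_f[OF injd] c by simp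
      then show False using a0 c by simp
    qed
    define Bd where "Bd = (\<Union>r\<in>{..<n1}. {x. a r \<bullet> x = - b r})"
    have Bnull: "Bd \<in> null_sets lborel" unfolding Bd_def
      by (intro closed_negl_null closed_Union negligible_Union) (auto simp: closed_hyperplane negligible_hyperplane anz)
    have AEc: "AE x in lborel. (\<lambda>n. ennreal ((hnn ns enum ein (\<Theta>s n) x - hnn ns enum ein \<Theta>0 x)\<^sup>2) * indicator \<Omega> x) \<longlonglongrightarrow> 0"
      using AE_not_in[OF Bnull]
    proof eventually_elim
      case (elim x)
      show ?case
      proof (cases "x \<in> \<Omega>")
        case False then show ?thesis by simp
      next
        case True
        have "(\<lambda>n. net ns (PP (\<Theta>s n)) (xx x)) \<longlonglongrightarrow> net ns (PP \<Theta>0) (xx x)"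
        proof (rule net_tendsto[OF L conv])
          fix r assume r: "r < ns!1"
          have "aff ns (PP \<Theta>0) 0 (xx x) r \<noteq> 0" 
          proof
            assume "aff ns (PP \<Theta>0) 0 (xx x) r = 0"
            then have "a r \<bullet> x = - b r" using affx[of x r] by simp
            then show False using elim r unfolding Bd_def n1_def by auto
          qed
          then show "(\<lambda>n. hid ns (PP (\<Theta>s n)) (xx x) 0 r) \<longlonglongrightarrow> hid ns (PP \<Theta>0) (xx x) 0 r"
            unfolding hid.simps by (intro heaviside_tendsto aff_tendsto conv tendsto_const)
        qed
        then have "(\<lambda>n. (hnn ns enum ein (\<Theta>s n) x - hnn ns enum ein \<Theta>0 x)\<^sup>2) \<longlonglongrightarrow> (hnn ns enum ein \<Theta>0 x - hnn ns enum ein \<Theta>0 x)\<^sup>2"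
          unfolding hnn_eq by (intro tendsto_intros)
        then have "(\<lambda>n. ennreal ((hnn ns enum ein (\<Theta>s n) x - hnn ns enum ein \<Theta>0 x)\<^sup>2)) \<longlonglongrightarrow> ennreal 0"
          by (intro tendsto_ennrealI) simp
        then show ?thesis using True by (simp add: indicator_def)
      qed
    qed
    have meas: "(\<lambda>x. hnn ns enum ein \<Theta> x) \<in> borel_measurable lborel" for \<Theta>
      unfolding hnn_eq xx_def by (intro net_meas) measurable
    have \<Omega>m: "\<Omega> \<in> sets lborel" using assms(8) by simp
    have "(\<lambda>n. \<integral>\<^sup>+x. ennreal ((hnn ns enum ein (\<Theta>s n) x - hnn ns enum ein \<Theta>0 x)\<^sup>2) * indicator \<Omega> x \<partial>lborel)
        \<longlonglongrightarrow> (\<integral>\<^sup>+x. 0 \<partial>(lborel :: (real^'d) measure))"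
    proof (rule nn_integral_dominated_convergence[where w="\<lambda>x. ennreal ((2*C)\<^sup>2) * indicator \<Omega> x"
        and u="\<lambda>n x. ennreal ((hnn ns enum ein (\<Theta>s n) x - hnn ns enum ein \<Theta>0 x)\<^sup>2) * indicator \<Omega> x"
        and u'="\<lambda>x. 0" and M=lborel])
      show "(\<lambda>x. ennreal ((hnn ns enum ein (\<Theta>s i) x - hnn ns enum ein \<Theta>0 x)\<^sup>2) * indicator \<Omega> x) \<in> borel_measurable lborel" for i
        using meas \<Omega>m by measurable
      show "(\<lambda>x. 0) \<in> borel_measurable lborel" by simp
      show "(\<lambda>x. ennreal ((2*C)\<^sup>2) * indicator \<Omega> x) \<in> borel_measurable lborel" using \<Omega>m by measurable
      show "AE x in lborel. ennreal ((hnn ns enum ein (\<Theta>s j) x - hnn ns enum ein \<Theta>0 x)\<^sup>2) * indicator \<Omega> x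
          \<le> ennreal ((2*C)\<^sup>2) * indicator \<Omega> x" for j
      proof (intro AE_I2)
        fix x
        have "(hnn ns enum ein (\<Theta>s j) x - hnn ns enum ein \<Theta>0 x)\<^sup>2 \<le> (2*C)\<^sup>2" by (rule bnd)
        then show "ennreal ((hnn ns enum ein (\<Theta>s j) x - hnn ns enum ein \<Theta>0 x)\<^sup>2) * indicator \<Omega> x
          \<le> ennreal ((2*C)\<^sup>2) * indicator \<Omega> x"
          by (intro mult_right_mono ennreal_leI) auto
      qed
      show "(\<integral>\<^sup>+x. ennreal ((2*C)\<^sup>2) * indicator \<Omega> x \<partial>lborel) < \<infinity>"
        using \<Omega>m assms(11) by (simp add: nn_integral_cmult_indicator ennreal_mult_less_top)
      show "AE x in lborel. (\<lambda>n. ennreal ((hnn ns enum ein (\<Theta>s n) x - hnn ns enum ein \<Theta>0 x)\<^sup>2) * indicator \<Omega> x) \<longlonglongrightarrow> 0"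
        by (rule AEc)
    qed
    then show ?thesis by simp
  qed
  show ?thesis
  proof (intro exI[of _ N] conjI allI impI ballI)
    show "(\<lambda>n. \<integral>\<^sup>+ x\<in>\<Omega>. ennreal ((hnn ns enum ein (\<Theta>s n) x - hnn ns enum ein \<Theta>0 x)\<^sup>2) \<partial>lborel) \<longlonglongrightarrow> 0"
      if "\<Theta>0 \<notin> N" "\<Theta>s \<longlonglongrightarrow> \<Theta>0" for \<Theta>0 \<Theta>s using P1 that by blast
    show "\<exists>\<Theta>'. \<Theta>' \<notin> N \<and> (\<forall>x\<in>\<Omega>. hnn ns enum ein \<Theta> x = hnn ns enum ein \<Theta>' x)"
      if "bounded \<Omega>" "\<Theta> \<in> N" for \<Theta> using P2 that by blast
  qed (use P3 P4 in auto)
qed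

end
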